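(* In the two-parallel-path setting with the linear decision rule, suppose $l_v=0$ for all vertices, $m<n$, all initial pheromone levels are positive, $f_s(t)=\lambda^tf_s(0)$ and $b_d(t)=\lambda^tb_d(0)$ with $\lambda>1$ and $f_s(0),b_d(0)>0$, and the initial flows at vertices other than $s,d$ satisfy $f_v(0)\le f_s(0)$, $b_v(0)\le b_d(0)$. Let $T_1=\max_{(u,v)\in E}\log(p_{uv}(0)/(f_s(0)+b_d(0)))/\log(1/\delta)$. Then for every integer $t\ge L+\max(0,T_1)$, $$r_{\min}(t+L)\ \ge\ \left(1+\frac{\min(f_s(0),b_d(0))\,(1-\delta)(\lambda-1)}{6\,(f_s(0)+b_d(0))\,\lambda^{m}}\right)r_{\min}(t).$$
   Context: Model (linear decision rule). Directed graph $G=(V,E)$, source $s$, destination $d$, discrete time; pheromone $p_{uv}(t)$, forward flows $f_v(t)$, backward flows $b_v(t)$; leakages $l_v\in[0,1]$; decay $\delta\in(0,1)$; exogenous inputs $f_s(t),b_d(t)$. Edge flows: $f_{uv}(t)=f_u(t)p_{uv}(t)/\sum_{z:(u,z)\in E}p_{uz}(t)$, $b_{uv}(t)=b_v(t)p_{uv}(t)/\sum_{z:(z,v)\in E}p_{zv}(t)$ (at a vertex with a single outgoing, resp. incoming, edge the whole flow goes along it). Updates: $f_v(t+1)=(1-l_v)\sum_{z:(z,v)\in E}f_{zv}(t)$ for $v\neq s$, $b_u(t+1)=(1-l_u)\sum_{z:(u,z)\in E}b_{uz}(t)$ for $u\ne d$, $p_{uv}(t+1)=\delta(p_{uv}(t)+f_{uv}(t)+b_{uv}(t))$.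 Two parallel paths: $G$ is the union of directed paths $P_1,P_2$ from $s$ to $d$ sharing only $s,d$; $s_1,s_2$ are the successors of $s$ and $d_1,d_2$ the predecessors of $d$ on $P_1,P_2$; $m=\mathrm{len}(P_1)$, $n=\mathrm{len}(P_2)$ (numbers of edges), $L=\max(m,n)$. Potential: $r_{ss_1}(t)=p_{ss_1}(t)/p_{ss_2}(t)$, $r_{d_1d}(t)=p_{d_1d}(t)/p_{d_2d}(t)$, and for $t\ge L$, $r_{\min}(t)=\min\{r_{ss_1}(t-i),\,r_{d_1d}(t-i):0\le i\le L-1\}$. *)

theory Defs
  imports Complex_Main
begin

datatype vtx = S | D | A nat | B nat

definition node1 :: "nat \<Rightarrow> nat \<Rightarrow> vtx" where
  "node1 m k = (if k = 0 then S else if k = m then D else A k)"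

definition node2 :: "nat \<Rightarrow> nat \<Rightarrow> vtx" where
  "node2 n k = (if k = 0 then S else if k = n then D else B k)"

definition edges :: "nat \<Rightarrow> nat \<Rightarrow> (vtx \<times> vtx) set" where
  "edges m n = {(node1 m k, node1 m (Suc k)) | k. k < m}
             \<union> {(node2 n k, node2 n (Suc k)) | k. k < n}"

definition fflow :: "(vtx \<times> vtx) set \<Rightarrow> (vtx \<Rightarrow> vtx \<Rightarrow> real) \<Rightarrow> (vtx \<Rightarrow> real) \<Rightarrow> vtx \<Rightarrow> vtx \<Rightarrow> real" where
  "fflow E p f u v = f u * p u v / (\<Sum>z | (u, z) \<in> E. p u z)"

definition bflow :: "(vtx \<times> vtx) set \<Rightarrow> (vtx \<Rightarrow> vtx \<Rightarrow> real) \<Rightarrow> (vtx \<Rightarrow> real) \<Rightarrow> vtx \<Rightarrow> vtx \<Rightarrow> real" where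
  "bflow E p b u v = b v * p u v / (\<Sum>z | (z, v) \<in> E. p z v)"

text \<open>The update rules of the model (for all times t). The exogenous inputs
  f_s(t), b_d(t) are not constrained here.\<close>
definition dynamics ::
  "(vtx \<times> vtx) set \<Rightarrow> vtx \<Rightarrow> vtx \<Rightarrow> real \<Rightarrow> (vtx \<Rightarrow> real)
   \<Rightarrow> (nat \<Rightarrow> vtx \<Rightarrow> vtx \<Rightarrow> real) \<Rightarrow> (nat \<Rightarrow> vtx \<Rightarrow> real) \<Rightarrow> (nat \<Rightarrow> vtx \<Rightarrow> real) \<Rightarrow> bool" where
  "dynamics E s d \<delta> l p f b \<longleftrightarrow>
     (\<forall>t.
       (\<forall>v. v \<noteq> s \<longrightarrow>
          f (Suc t) v = (1 - l v) * (\<Sum>z | (z, v) \<in> E. fflow E (p t) (f t) z v)) \<and>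
       (\<forall>u. u \<noteq> d \<longrightarrow>
          b (Suc t) u = (1 - l u) * (\<Sum>z | (u, z) \<in> E. bflow E (p t) (b t) u z)) \<and>
       (\<forall>(u, v) \<in> E.
          p (Suc t) u v = \<delta> * (p t u v + fflow E (p t) (f t) u v + bflow E (p t) (b t) u v)))"

definition r_s :: "nat \<Rightarrow> nat \<Rightarrow> (nat \<Rightarrow> vtx \<Rightarrow> vtx \<Rightarrow> real) \<Rightarrow> nat \<Rightarrow> real" where
  "r_s m n p t = p t S (node1 m 1) / p t S (node2 n 1)"

definition r_d :: "nat \<Rightarrow> nat \<Rightarrow> (nat \<Rightarrow> vtx \<Rightarrow> vtx \<Rightarrow> real) \<Rightarrow> nat \<Rightarrow> real" where
  "r_d m n p t = p t (node1 m (m - 1)) D / p t (node2 n (n - 1)) D"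

definition r_min :: "nat \<Rightarrow> nat \<Rightarrow> (nat \<Rightarrow> vtx \<Rightarrow> vtx \<Rightarrow> real) \<Rightarrow> nat \<Rightarrow> real" where
  "r_min m n p t =
     Min ((\<lambda>i. r_s m n p (t - i)) ` {..<max m n} \<union> (\<lambda>i. r_d m n p (t - i)) ` {..<max m n})"

end

theory Submission
  imports Defs
begin

lemma step_ineq:
  fixes R c F b1 b2 p1 p2 u1 u2 w1 w2 :: real
  assumes R: "R \<ge> 0" and c: "c \<ge> 0" and pp: "p1 > 0" "p2 > 0" and uu: "u1 > 0" "u2 > 0"
    and ww: "w1 > 0" "w2 > 0" and F: "F \<ge> 0" and b2: "b2 \<ge> 0"
    and r1: "p1 \<ge> R * p2" and r2: "u1 \<ge> R * u2" and r3: "w1 \<ge> R * w2"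
    and gain: "c * (p1 + p2 + F + b2) \<le> b1 - b2"
  shows "(1 + c) * R * (p2 + F * p2 / (p1 + p2) + b2 * w2 / (w1 + w2))
         \<le> p1 + F * p1 / (p1 + p2) + b1 * u1 / (u1 + u2)"
proof -
  define q where "q = R / (1 + R)"
  have q0: "q \<ge> 0" using R by (simp add: q_def)
  have "c * (p1 + p2 + F + b2) \<ge> 0" using c pp F b2 by simp
  then have b1: "b1 \<ge> b2" using gain by linarith
  have A1: "F * p1 / (p1 + p2) \<ge> R * (F * p2 / (p1 + p2))"
  proof -
    have "R * (F * p2) \<le> F * p1" using r1 F by (metis mult.left_commute mult_left_mono)
    then show ?thesis using pp by (simp add: divide_right_mono)
  qed
  have A2: "b1 * u1 / (u1 + u2) \<ge> b1 * q"
  proof -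
    have h: "R * (u1 + u2) \<le> u1 * (1 + R)" using r2 by (simp add: algebra_simps)
    have "q \<le> u1 / (u1 + u2)" unfolding q_def using uu R h
      by (simp add: divide_simps mult.commute)
    then have "b1 * q \<le> b1 * (u1 / (u1 + u2))" using b1 b2 by (intro mult_left_mono) auto
    then show ?thesis by simp
  qed
  have h3: "w2 * (1 + R) \<le> w1 + w2" using r3 by (simp add: algebra_simps)
  have A3: "w2 / (w1 + w2) \<le> 1 / (1 + R)" using ww R h3
    by (simp add: divide_simps mult.commute)
  have h4: "p2 * (1 + R) \<le> p1 + p2" using r1 by (simp add: algebra_simps)
  have A4: "p2 / (p1 + p2) \<le> 1 / (1 + R)" using pp R h4
    by (simp add: divide_simps mult.commute)
  have B3: "b2 * w2 / (w1 + w2) \<le> b2 / (1 + R)"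
    using mult_left_mono[OF A3 b2] by simp
  have B4: "F * p2 / (p1 + p2) \<le> F / (1 + R)"
    using mult_left_mono[OF A4 F] by simp
  have Rq: "R = q * (1 + R)" unfolding q_def using R by simp
  have "(1 + c) * R * (p2 + F * p2 / (p1 + p2) + b2 * w2 / (w1 + w2))
      = R * p2 + R * (F * p2 / (p1 + p2)) + R * (b2 * w2 / (w1 + w2))
        + c * R * p2 + c * R * (F * p2 / (p1 + p2) + b2 * w2 / (w1 + w2))"
    by (simp add: algebra_simps add_divide_distrib)
  also have "\<dots> \<le> R * p2 + R * (F * p2 / (p1 + p2)) + R * (b2 / (1 + R))
        + c * R * p2 + c * R * (F / (1 + R) + b2 / (1 + R))"
    using B3 B4 R c
    by (intro add_mono mult_left_mono order.refl) (auto simp: mult_nonneg_nonneg)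
  also have "R * (b2 / (1 + R)) = q * b2" unfolding q_def by simp
  also have "c * R * (F / (1 + R) + b2 / (1 + R)) = q * (c * (F + b2))"
  proof -
    have "F / (1 + R) + b2 / (1 + R) = (F + b2) / (1 + R)" by (simp add: add_divide_distrib)
    then show ?thesis unfolding q_def by (simp add: mult_ac)
  qed
  also have "c * R * p2 = q * (c * ((1 + R) * p2))"
  proof -
    have "q * (c * ((1 + R) * p2)) = (q * (1 + R)) * (c * p2)" by (simp add: mult_ac)
    then show ?thesis using Rq by (simp add: mult_ac)
  qed
  also have "R * p2 + R * (F * p2 / (p1 + p2)) + q * b2 + q * (c * ((1 + R) * p2)) + q * (c * (F + b2))
      = R * p2 + R * (F * p2 / (p1 + p2)) + q * (b2 + c * ((1 + R) * p2 + F + b2))"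
    by (simp add: algebra_simps)
  also have "\<dots> \<le> R * p2 + R * (F * p2 / (p1 + p2)) + q * b1"
  proof -
    have "(1 + R) * p2 \<le> p1 + p2" using r1 by (simp add: algebra_simps)
    then have "c * ((1 + R) * p2 + F + b2) \<le> c * (p1 + p2 + F + b2)" using c
      by (intro mult_left_mono) auto
    then have "b2 + c * ((1 + R) * p2 + F + b2) \<le> b1" using gain by linarith
    then show ?thesis using q0 by (intro add_mono order.refl mult_left_mono) auto
  qed
  also have "\<dots> \<le> p1 + F * p1 / (p1 + p2) + b1 * u1 / (u1 + u2)"
    using r1 A1 A2 by (simp add: mult.commute)
  finally show ?thesis .
qed

lemma geo_bound:
  fixes X :: "nat \<Rightarrow> real" and d lam C :: real
  assumes d: "0 < d" "d < 1" and lam: "lam > 1" and C: "C \<ge> 0"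
    and rec: "\<And>t. X (Suc t) \<le> d * (X t + C * lam ^ t)"
  shows "X t \<le> d ^ t * X 0 + C * lam ^ t * d / (lam - d)"
proof (induction t)
  case 0
  have "C * d / (lam - d) \<ge> 0" using d lam C by simp
  then show ?case by simp
next
  case (Suc t)
  have ld: "lam - d > 0" using d lam by simp
  have "X (Suc t) \<le> d * (X t + C * lam ^ t)" by (rule rec)
  also have "\<dots> \<le> d * (d ^ t * X 0 + C * lam ^ t * d / (lam - d) + C * lam ^ t)"
    using Suc d C by (intro mult_left_mono add_mono) auto
  also have "\<dots> = d ^ Suc t * X 0 + C * lam ^ Suc t * d / (lam - d)"
    using ld by (simp add: field_simps)
  finally show ?case .
qed

lemma gain_arith:
  fixes lam dlt G H P :: real and m n \<tau> :: nat
  assumes lam: "lam > 1" and dlt: "0 < dlt" "dlt < 1" and G: "G > 0" and H: "H > 0"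
    and mn: "1 \<le> m" "m < n" and tau: "n - 1 \<le> \<tau>"
    and P: "P \<le> 4 * (G + H) * lam ^ \<tau> / (1 - dlt)"
  shows "min G H * (1 - dlt) * (lam - 1) / (6 * (G + H) * lam ^ m)
           * (P + lam ^ \<tau> * H + lam ^ (\<tau> - (n - 1)) * G)
         \<le> lam ^ (\<tau> - (m - 1)) * G - lam ^ (\<tau> - (n - 1)) * G"
proof -
  define X where "X = lam ^ (\<tau> - m)"
  define Y where "Y = lam ^ (\<tau> - (n - 1))"
  define K where "K = G + H"
  define c where "c = min G H * (1 - dlt) * (lam - 1) / (6 * K * lam ^ m)"
  have X0: "X > 0" using lam by (simp add: X_def)
  have Y0: "Y > 0" using lam by (simp add: Y_def)
  have K0: "K > 0" using G H by (simp add: K_def)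
  have c0: "c \<ge> 0" using G H dlt lam K0 by (simp add: c_def)
  have lt: "lam ^ \<tau> = X * lam ^ m" unfolding X_def using mn tau
    by (simp add: power_add[symmetric])
  have lm1: "lam ^ (\<tau> - (m - 1)) = X * lam"
  proof -
    have "\<tau> - (m - 1) = Suc (\<tau> - m)" using mn tau by arith
    then show ?thesis by (simp add: X_def mult.commute)
  qed
  have YX: "Y \<le> X" unfolding X_def Y_def using lam mn tau by (intro power_increasing) auto
  have lm: "1 \<le> lam ^ m" using lam by simp
  have d1: "1 \<le> 1 / (1 - dlt)" using dlt by simp
  have "c * (P + lam ^ \<tau> * H + Y * G) \<le> c * (4 * K * (X * lam ^ m) / (1 - dlt) + X * lam ^ m * K)"
  proof -
    have "Y * G \<le> X * G" using YX G by (intro mult_right_mono) auto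
    also have "X * G * 1 \<le> X * G * lam ^ m" using lm X0 G by (intro mult_left_mono) auto
    finally have "Y * G \<le> X * lam ^ m * G" by (simp add: mult_ac)
    then have "P + lam ^ \<tau> * H + Y * G \<le> 4 * K * (X * lam ^ m) / (1 - dlt) + X * lam ^ m * K"
      using P lt unfolding K_def by (simp add: algebra_simps)
    then show ?thesis using c0 by (intro mult_left_mono) auto
  qed
  also have "\<dots> \<le> c * (X * lam ^ m * K * 5 / (1 - dlt))"
  proof -
    have "X * lam ^ m * K \<le> X * lam ^ m * K * (1 / (1 - dlt))"
      using mult_left_mono[OF d1, of "X * lam ^ m * K"] X0 K0 lm by simp
    moreover have "X * lam ^ m * K * 5 / (1 - dlt)
        = X * lam ^ m * K * (1 / (1 - dlt)) + 4 * K * (X * lam ^ m) / (1 - dlt)"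
      by (simp add: add_divide_distrib[symmetric] algebra_simps)
    ultimately have "4 * K * (X * lam ^ m) / (1 - dlt) + X * lam ^ m * K \<le> X * lam ^ m * K * 5 / (1 - dlt)"
      by linarith
    then show ?thesis using c0 by (intro mult_left_mono) auto
  qed
  also have "\<dots> = min G H * (lam - 1) * X * 5 / 6"
    using dlt K0 lam unfolding c_def by (simp add: field_simps)
  also have "\<dots> \<le> G * (lam - 1) * X"
  proof -
    define W where "W = (lam - 1) * X"
    have W0: "W \<ge> 0" using lam X0 by (simp add: W_def)
    have "min G H * W \<le> G * W" using W0 by (intro mult_right_mono) auto
    moreover have "G * W \<ge> 0" using G W0 by simp
    ultimately have "min G H * W * 5 / 6 \<le> G * W" by linarith
    then show ?thesis unfolding W_def by (simp add: mult_ac)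
  qed
  also have "\<dots> \<le> X * lam * G - Y * G" using YX G by (simp add: algebra_simps)
  finally show ?thesis unfolding c_def K_def Y_def lm1 by simp
qed


lemma finite_edges: "finite (edges m n)"
  unfolding edges_def by (intro finite_UnI finite_image_set) auto

lemma mem_edges: "(u,v) \<in> edges m n \<longleftrightarrow>
   (\<exists>k<m. u = node1 m k \<and> v = node1 m (Suc k)) \<or> (\<exists>k<n. u = node2 n k \<and> v = node2 n (Suc k))"
  unfolding edges_def by auto

lemma node1_eq[simp]:
  "node1 m j = A k \<longleftrightarrow> j = k \<and> 0 < k \<and> k \<noteq> m"
  "node1 m j = S \<longleftrightarrow> j = 0"
  "node1 m j = D \<longleftrightarrow> j \<noteq> 0 \<and> j = m"
  "node1 m j \<noteq> B k"
  "A k = node1 m j \<longleftrightarrow> j = k \<and> 0 < k \<and> k \<noteq> m"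
  "S = node1 m j \<longleftrightarrow> j = 0"
  "D = node1 m j \<longleftrightarrow> j \<noteq> 0 \<and> j = m"
  "B k \<noteq> node1 m j"
  by (auto simp: node1_def)

lemma node2_eq[simp]:
  "node2 n j = B k \<longleftrightarrow> j = k \<and> 0 < k \<and> k \<noteq> n"
  "node2 n j = S \<longleftrightarrow> j = 0"
  "node2 n j = D \<longleftrightarrow> j \<noteq> 0 \<and> j = n"
  "node2 n j \<noteq> A k"
  "B k = node2 n j \<longleftrightarrow> j = k \<and> 0 < k \<and> k \<noteq> n"
  "S = node2 n j \<longleftrightarrow> j = 0"
  "D = node2 n j \<longleftrightarrow> j \<noteq> 0 \<and> j = n"
  "A k \<noteq> node2 n j"
  by (auto simp: node2_def)

lemma in_A: "{z. (z, A k) \<in> edges m n} = (if 0 < k \<and> k < m then {node1 m (k - 1)} else {})"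
proof -
  have "(z, A k) \<in> edges m n \<longleftrightarrow> 0 < k \<and> k < m \<and> z = node1 m (k - 1)" for z
  proof
    assume "(z, A k) \<in> edges m n"
    then obtain j where "j < m" "z = node1 m j" "node1 m (Suc j) = A k"
      unfolding mem_edges by auto
    then show "0 < k \<and> k < m \<and> z = node1 m (k - 1)" by auto
  next
    assume "0 < k \<and> k < m \<and> z = node1 m (k - 1)"
    then show "(z, A k) \<in> edges m n" unfolding mem_edges
      by (intro disjI1 exI[of _ "k - 1"]) auto
  qed
  then show ?thesis by auto
qed

lemma out_A: "{z. (A k, z) \<in> edges m n} = (if 0 < k \<and> k < m then {node1 m (Suc k)} else {})"
  unfolding mem_edges by auto

lemma in_B: "{z. (z, B k) \<in> edges m n} = (if 0 < k \<and> k < n then {node2 n (k - 1)} else {})"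
  unfolding mem_edges by (auto intro: exI[of _ "k - 1"])

lemma out_B: "{z. (B k, z) \<in> edges m n} = (if 0 < k \<and> k < n then {node2 n (Suc k)} else {})"
  unfolding mem_edges by auto

lemma out_S: "1 \<le> m \<Longrightarrow> 1 \<le> n \<Longrightarrow> {z. (S, z) \<in> edges m n} = {node1 m 1, node2 n 1}"
  unfolding mem_edges by auto

lemma in_D: "1 \<le> m \<Longrightarrow> 1 \<le> n \<Longrightarrow> {z. (z, D) \<in> edges m n} = {node1 m (m-1), node2 n (n-1)}"
  unfolding mem_edges by (auto intro: exI[of _ "m - 1"] exI[of _ "n - 1"])

lemma in_S: "{z. (z, S) \<in> edges m n} = {}"
  unfolding mem_edges by auto

lemma out_D: "{z. (D, z) \<in> edges m n} = {}"
  unfolding mem_edges by auto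

lemma edgeA_in: "0 < k \<Longrightarrow> k < m \<Longrightarrow> (node1 m (k - 1), A k) \<in> edges m n"
  unfolding mem_edges by (intro disjI1 exI[of _ "k - 1"]) auto
lemma edgeA_out: "0 < k \<Longrightarrow> k < m \<Longrightarrow> (A k, node1 m (Suc k)) \<in> edges m n"
  unfolding mem_edges by (intro disjI1 exI[of _ "k"]) auto
lemma edgeB_in: "0 < k \<Longrightarrow> k < n \<Longrightarrow> (node2 n (k - 1), B k) \<in> edges m n"
  unfolding mem_edges by (intro disjI2 exI[of _ "k - 1"]) auto
lemma edgeB_out: "0 < k \<Longrightarrow> k < n \<Longrightarrow> (B k, node2 n (Suc k)) \<in> edges m n"
  unfolding mem_edges by (intro disjI2 exI[of _ "k"]) auto
lemma edge_S1: "1 \<le> m \<Longrightarrow> (S, node1 m 1) \<in> edges m n"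
  unfolding mem_edges by (intro disjI1 exI[of _ "0"]) auto
lemma edge_S2: "1 \<le> n \<Longrightarrow> (S, node2 n 1) \<in> edges m n"
  unfolding mem_edges by (intro disjI2 exI[of _ "0"]) auto
lemma edge_D1: "1 \<le> m \<Longrightarrow> (node1 m (m - 1), D) \<in> edges m n"
  unfolding mem_edges by (intro disjI1 exI[of _ "m - 1"]) auto
lemma edge_D2: "1 \<le> n \<Longrightarrow> (node2 n (n - 1), D) \<in> edges m n"
  unfolding mem_edges by (intro disjI2 exI[of _ "n - 1"]) auto

lemma fin_out: "finite {z. (u, z) \<in> edges m n}"
  by (rule finite_subset[OF _ finite_imageI[OF finite_edges, of snd]]) force

lemma fin_in: "finite {z. (z, v) \<in> edges m n}"
  by (rule finite_subset[OF _ finite_imageI[OF finite_edges, of fst]]) force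

lemma fflow_nonneg:
  assumes "f u \<ge> 0" "\<forall>(x,y)\<in>E. p x y > 0" "(u,v) \<in> E"
  shows "fflow E p f u v \<ge> 0"
proof -
  have "(\<Sum>z | (u, z) \<in> E. p u z) \<ge> 0"
    using assms(2) by (intro sum_nonneg) (auto simp: less_imp_le)
  moreover have "p u v \<ge> 0" using assms by auto
  ultimately show ?thesis using assms(1) unfolding fflow_def by simp
qed

lemma bflow_nonneg:
  assumes "b v \<ge> 0" "\<forall>(x,y)\<in>E. p x y > 0" "(u,v) \<in> E"
  shows "bflow E p b u v \<ge> 0"
proof -
  have "(\<Sum>z | (z, v) \<in> E. p z v) \<ge> 0"
    using assms(2) by (intro sum_nonneg) (auto simp: less_imp_le)
  moreover have "p u v \<ge> 0" using assms by auto
  ultimately show ?thesis using assms(1) unfolding bflow_def by simp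
qed

lemma fflow_le:
  assumes "f u \<ge> 0" "\<forall>(x,y)\<in>E. p x y > 0" "(u,v) \<in> E" "finite {z. (u,z) \<in> E}"
  shows "fflow E p f u v \<le> f u"
proof -
  have "p u v \<le> (\<Sum>z | (u, z) \<in> E. p u z)"
    using assms(2-4) by (intro member_le_sum) (auto simp: less_imp_le)
  moreover have "p u v > 0" using assms by auto
  ultimately have "p u v / (\<Sum>z | (u, z) \<in> E. p u z) \<le> 1" by simp
  then have "f u * (p u v / (\<Sum>z | (u, z) \<in> E. p u z)) \<le> f u * 1"
    using assms(1) by (intro mult_left_mono) auto
  then show ?thesis unfolding fflow_def by simp
qed

lemma bflow_le:
  assumes "b v \<ge> 0" "\<forall>(x,y)\<in>E. p x y > 0" "(u,v) \<in> E" "finite {z. (z,v) \<in> E}"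
  shows "bflow E p b u v \<le> b v"
proof -
  have "p u v \<le> (\<Sum>z | (z, v) \<in> E. p z v)"
    using assms(2-4) by (intro member_le_sum) (auto simp: less_imp_le)
  moreover have "p u v > 0" using assms by auto
  ultimately have "p u v / (\<Sum>z | (z, v) \<in> E. p z v) \<le> 1" by simp
  then have "b v * (p u v / (\<Sum>z | (z, v) \<in> E. p z v)) \<le> b v * 1"
    using assms(1) by (intro mult_left_mono) auto
  then show ?thesis unfolding bflow_def by simp
qed

lemma fflow_single: "{z. (u,z) \<in> E} = {v} \<Longrightarrow> p u v > 0 \<Longrightarrow> fflow E p f u v = f u"
  unfolding fflow_def by simp

lemma bflow_single: "{z. (z,v) \<in> E} = {u} \<Longrightarrow> p u v > 0 \<Longrightarrow> bflow E p b u v = b v"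
  unfolding bflow_def by simp

lemma fflow_two: "{z. (u,z) \<in> E} = {a,c} \<Longrightarrow> a \<noteq> c \<Longrightarrow>
   fflow E p f u a = f u * p u a / (p u a + p u c) \<and> fflow E p f u c = f u * p u c / (p u a + p u c)"
  unfolding fflow_def by (simp add: add.commute)

lemma bflow_two: "{z. (z,v) \<in> E} = {a,c} \<Longrightarrow> a \<noteq> c \<Longrightarrow>
   bflow E p b a v = b v * p a v / (p a v + p c v) \<and> bflow E p b c v = b v * p c v / (p a v + p c v)"
  unfolding bflow_def by (simp add: add.commute)

locale sys =
  fixes m n :: nat and dlt lam :: real and l :: "vtx \<Rightarrow> real"
    and p :: "nat \<Rightarrow> vtx \<Rightarrow> vtx \<Rightarrow> real" and f b :: "nat \<Rightarrow> vtx \<Rightarrow> real"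
  assumes dyn: "dynamics (edges m n) S D dlt l p f b"
    and delta: "0 < dlt" "dlt < 1"
    and leak: "\<forall>v. l v = 0"
    and mn: "1 \<le> m" "m < n"
    and p0: "\<forall>(u, v) \<in> edges m n. p 0 u v > 0"
    and lam: "lam > 1"
    and fs: "\<forall>t. f t S = lam ^ t * f 0 S"
    and bd: "\<forall>t. b t D = lam ^ t * b 0 D"
    and fs0: "f 0 S > 0" and bd0: "b 0 D > 0"
    and nonneg: "\<forall>v. f 0 v \<ge> 0 \<and> b 0 v \<ge> 0"
    and init: "\<forall>v. v \<noteq> S \<and> v \<noteq> D \<longrightarrow> f 0 v \<le> f 0 S \<and> b 0 v \<le> b 0 D"
begin

abbreviation "E \<equiv> edges m n"

lemma fS: "f t S = lam ^ t * f 0 S" using fs by blast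
lemma bD: "b t D = lam ^ t * b 0 D" using bd by blast

lemma f_step: "v \<noteq> S \<Longrightarrow> f (Suc t) v = (\<Sum>z | (z,v)\<in>E. fflow E (p t) (f t) z v)"
  using dyn leak unfolding dynamics_def by auto

lemma b_step: "u \<noteq> D \<Longrightarrow> b (Suc t) u = (\<Sum>z | (u,z)\<in>E. bflow E (p t) (b t) u z)"
  using dyn leak unfolding dynamics_def by auto

lemma p_step: "(u,v)\<in>E \<Longrightarrow>
  p (Suc t) u v = dlt * (p t u v + fflow E (p t) (f t) u v + bflow E (p t) (b t) u v)"
  using dyn unfolding dynamics_def by auto

lemma pos_all: "(\<forall>(u,v)\<in>E. p t u v > 0) \<and> (\<forall>v. f t v \<ge> 0) \<and> (\<forall>v. b t v \<ge> 0)"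
proof (induction t)
  case 0
  then show ?case using p0 nonneg by auto
next
  case (Suc t)
  then have P: "\<forall>(u,v)\<in>E. p t u v > 0" and F: "\<forall>v. f t v \<ge> 0" and B: "\<forall>v. b t v \<ge> 0" by auto
  have "p (Suc t) u v > 0" if "(u,v) \<in> E" for u v
  proof -
    have "fflow E (p t) (f t) u v \<ge> 0" using fflow_nonneg[OF _ P that] F by auto
    moreover have "bflow E (p t) (b t) u v \<ge> 0" using bflow_nonneg[OF _ P that] B by auto
    moreover have "p t u v > 0" using P that by auto
    ultimately show ?thesis using p_step[OF that] delta by simp
  qed
  moreover have "f (Suc t) v \<ge> 0" for v
  proof (cases "v = S")
    case True
    then show ?thesis using fS[of "Suc t"] lam fs0 by simp
  next
    case False
    show ?thesis unfolding f_step[OF False]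
      by (intro sum_nonneg) (use fflow_nonneg[OF _ P] F in auto)
  qed
  moreover have "b (Suc t) v \<ge> 0" for v
  proof (cases "v = D")
    case True
    then show ?thesis using bD[of "Suc t"] lam bd0 by simp
  next
    case False
    show ?thesis unfolding b_step[OF False]
      by (intro sum_nonneg) (use bflow_nonneg[OF _ P] B in auto)
  qed
  ultimately show ?case by auto
qed

lemma Ppos: "\<forall>(u,v)\<in>E. p t u v > 0" using pos_all by blast
lemma ppos: "(u,v) \<in> E \<Longrightarrow> p t u v > 0" using Ppos[of t] by blast
lemma fnn: "f t v \<ge> 0" using pos_all by auto
lemma bnn: "b t v \<ge> 0" using pos_all by auto

lemma fbound: "v \<noteq> D \<Longrightarrow> f t v \<le> lam ^ t * f 0 S"
proof (induction t arbitrary: v)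
  case 0
  then show ?case using init[rule_format, of v] by (cases "v = S") simp_all
next
  case (Suc t)
  have lt: "lam ^ t * f 0 S \<le> lam ^ Suc t * f 0 S"
    using lam fs0 by (intro mult_right_mono) (auto intro: power_increasing)
  have nn: "0 \<le> lam ^ Suc t * f 0 S" using lam fs0 by simp
  show ?case
  proof (cases v)
    case S
    then show ?thesis using fS[of "Suc t"] by simp
  next
    case D
    then show ?thesis using Suc by simp
  next
    case (A k)
    show ?thesis
    proof (cases "0 < k \<and> k < m")
      case True
      let ?u = "node1 m (k - 1)"
      have e: "(?u, A k) \<in> E" using edgeA_in True by blast
      have "f (Suc t) v = fflow E (p t) (f t) ?u (A k)"
        unfolding A f_step[of "A k", simplified] in_A using True by simp
      also have "\<dots> \<le> f t ?u" by (rule fflow_le[OF fnn Ppos e fin_out])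
      also have "\<dots> \<le> lam ^ t * f 0 S" using True by (intro Suc.IH) auto
      finally show ?thesis using lt by simp
    next
      case False
      have "f (Suc t) v = 0"
        unfolding A f_step[of "A k", simplified] in_A using False by auto
      then show ?thesis using nn by simp
    qed
  next
    case (B k)
    show ?thesis
    proof (cases "0 < k \<and> k < n")
      case True
      let ?u = "node2 n (k - 1)"
      have e: "(?u, B k) \<in> E" using edgeB_in True by blast
      have "f (Suc t) v = fflow E (p t) (f t) ?u (B k)"
        unfolding B f_step[of "B k", simplified] in_B using True by simp
      also have "\<dots> \<le> f t ?u" by (rule fflow_le[OF fnn Ppos e fin_out])
      also have "\<dots> \<le> lam ^ t * f 0 S" using True by (intro Suc.IH) auto
      finally show ?thesis using lt by simp
    next
      case False
      have "f (Suc t) v = 0"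
        unfolding B f_step[of "B k", simplified] in_B using False by auto
      then show ?thesis using nn by simp
    qed
  qed
qed

lemma bbound: "v \<noteq> S \<Longrightarrow> b t v \<le> lam ^ t * b 0 D"
proof (induction t arbitrary: v)
  case 0
  then show ?case using init[rule_format, of v] by (cases "v = D") simp_all
next
  case (Suc t)
  have lt: "lam ^ t * b 0 D \<le> lam ^ Suc t * b 0 D"
    using lam bd0 by (intro mult_right_mono) (auto intro: power_increasing)
  have nn: "0 \<le> lam ^ Suc t * b 0 D" using lam bd0 by simp
  show ?case
  proof (cases v)
    case D
    then show ?thesis using bD[of "Suc t"] by simp
  next
    case S
    then show ?thesis using Suc by simp
  next
    case (A k)
    show ?thesis
    proof (cases "0 < k \<and> k < m")
      case True
      let ?u = "node1 m (Suc k)"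
      have e: "(A k, ?u) \<in> E" using edgeA_out True by blast
      have "b (Suc t) v = bflow E (p t) (b t) (A k) ?u"
        unfolding A b_step[of "A k", simplified] out_A using True by simp
      also have "\<dots> \<le> b t ?u" by (rule bflow_le[OF bnn Ppos e fin_in])
      also have "\<dots> \<le> lam ^ t * b 0 D" using True by (intro Suc.IH) auto
      finally show ?thesis using lt by simp
    next
      case False
      have "b (Suc t) v = 0"
        unfolding A b_step[of "A k", simplified] out_A using False by auto
      then show ?thesis using nn by simp
    qed
  next
    case (B k)
    show ?thesis
    proof (cases "0 < k \<and> k < n")
      case True
      let ?u = "node2 n (Suc k)"
      have e: "(B k, ?u) \<in> E" using edgeB_out True by blast
      have "b (Suc t) v = bflow E (p t) (b t) (B k) ?u"
        unfolding B b_step[of "B k", simplified] out_B using True by simp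
      also have "\<dots> \<le> b t ?u" by (rule bflow_le[OF bnn Ppos e fin_in])
      also have "\<dots> \<le> lam ^ t * b 0 D" using True by (intro Suc.IH) auto
      finally show ?thesis using lt by simp
    next
      case False
      have "b (Suc t) v = 0"
        unfolding B b_step[of "B k", simplified] out_B using False by auto
      then show ?thesis using nn by simp
    qed
  qed
qed


abbreviation "K \<equiv> f 0 S + b 0 D"

lemma n2: "2 \<le> n" using mn by simp

lemma s2_eq: "node2 n 1 = B 1" using n2 by (simp add: node2_def)
lemma d2_eq: "node2 n (n - 1) = B (n - 1)" using n2 by (simp add: node2_def)
lemma s12: "node1 m 1 \<noteq> node2 n 1" using n2 by (simp add: node1_def node2_def)
lemma d12: "node1 m (m - 1) \<noteq> node2 n (n - 1)" using n2 mn by (simp add: node1_def node2_def)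
lemma eS1: "(S, node1 m 1) \<in> E" using edge_S1 mn by blast
lemma eS2: "(S, node2 n 1) \<in> E" using edge_S2 mn by simp
lemma eD1: "(node1 m (m - 1), D) \<in> E" using edge_D1 mn by blast
lemma eD2: "(node2 n (n - 1), D) \<in> E" using edge_D2 mn by simp

lemma PS_rec: "p (Suc t) S (node1 m 1) + p (Suc t) S (node2 n 1)
   \<le> dlt * ((p t S (node1 m 1) + p t S (node2 n 1)) + 2 * K * lam ^ t)"
proof -
  have F1: "fflow E (p t) (f t) S (node1 m 1) \<le> lam ^ t * f 0 S"
    using fflow_le[where f="f t" and p="p t", OF fnn[of t S] Ppos[of t] eS1 fin_out] fS[of t] by simp
  have F2: "fflow E (p t) (f t) S (node2 n 1) \<le> lam ^ t * f 0 S"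
    using fflow_le[where f="f t" and p="p t", OF fnn[of t S] Ppos[of t] eS2 fin_out] fS[of t] by simp
  have B1: "bflow E (p t) (b t) S (node1 m 1) \<le> lam ^ t * b 0 D"
    using bflow_le[where b="b t" and p="p t", OF bnn[of t "node1 m 1"] Ppos[of t] eS1 fin_in] bbound[of "node1 m 1" t] by simp
  have B2: "bflow E (p t) (b t) S (node2 n 1) \<le> lam ^ t * b 0 D"
    using bflow_le[where b="b t" and p="p t", OF bnn[of t "node2 n 1"] Ppos[of t] eS2 fin_in] bbound[of "node2 n 1" t] by simp
  have "p (Suc t) S (node1 m 1) + p (Suc t) S (node2 n 1)
     = dlt * (p t S (node1 m 1) + p t S (node2 n 1) + (fflow E (p t) (f t) S (node1 m 1)
        + fflow E (p t) (f t) S (node2 n 1) + bflow E (p t) (b t) S (node1 m 1) + bflow E (p t) (b t) S (node2 n 1)))"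
    using p_step[OF eS1, of t] p_step[OF eS2, of t] by (simp add: algebra_simps)
  also have "\<dots> \<le> dlt * ((p t S (node1 m 1) + p t S (node2 n 1)) + 2 * K * lam ^ t)"
    using F1 F2 B1 B2 delta by (intro mult_left_mono) (auto simp: algebra_simps)
  finally show ?thesis .
qed

lemma d1D: "node1 m (m - 1) \<noteq> D" using mn by auto

lemma d2D: "node2 n (n - 1) \<noteq> D" using mn by auto

lemma PD_rec: "p (Suc t) (node1 m (m - 1)) D + p (Suc t) (node2 n (n - 1)) D
   \<le> dlt * ((p t (node1 m (m - 1)) D + p t (node2 n (n - 1)) D) + 2 * K * lam ^ t)"
proof -
  have F1: "fflow E (p t) (f t) (node1 m (m - 1)) D \<le> lam ^ t * f 0 S"
    using fflow_le[where f="f t" and p="p t", OF fnn[of t "node1 m (m - 1)"] Ppos[of t] eD1 fin_out] fbound[OF d1D, of t] by simp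
  have F2: "fflow E (p t) (f t) (node2 n (n - 1)) D \<le> lam ^ t * f 0 S"
    using fflow_le[where f="f t" and p="p t", OF fnn[of t "node2 n (n - 1)"] Ppos[of t] eD2 fin_out] fbound[OF d2D, of t] by simp
  have B1: "bflow E (p t) (b t) (node1 m (m - 1)) D \<le> lam ^ t * b 0 D"
    using bflow_le[where b="b t" and p="p t", OF bnn[of t D] Ppos[of t] eD1 fin_in] bD[of t] by simp
  have B2: "bflow E (p t) (b t) (node2 n (n - 1)) D \<le> lam ^ t * b 0 D"
    using bflow_le[where b="b t" and p="p t", OF bnn[of t D] Ppos[of t] eD2 fin_in] bD[of t] by simp
  have "p (Suc t) (node1 m (m - 1)) D + p (Suc t) (node2 n (n - 1)) D
     = dlt * (p t (node1 m (m - 1)) D + p t (node2 n (n - 1)) D + (fflow E (p t) (f t) (node1 m (m - 1)) D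
        + fflow E (p t) (f t) (node2 n (n - 1)) D + bflow E (p t) (b t) (node1 m (m - 1)) D
        + bflow E (p t) (b t) (node2 n (n - 1)) D))"
    using p_step[OF eD1, of t] p_step[OF eD2, of t] by (simp add: algebra_simps)
  also have "\<dots> \<le> dlt * ((p t (node1 m (m - 1)) D + p t (node2 n (n - 1)) D) + 2 * K * lam ^ t)"
    using F1 F2 B1 B2 delta by (intro mult_left_mono) (auto simp: algebra_simps)
  finally show ?thesis .
qed

lemma P_final:
  fixes X :: "nat \<Rightarrow> real"
  assumes rec: "\<And>t. X (Suc t) \<le> dlt * (X t + 2 * K * lam ^ t)"
    and X0: "dlt ^ t * X 0 \<le> 2 * K"
  shows "X t \<le> 4 * K * lam ^ t / (1 - dlt)"
proof -
  have K0: "K > 0" using fs0 bd0 by simp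
  have A: "X t \<le> dlt ^ t * X 0 + 2 * K * lam ^ t * dlt / (lam - dlt)"
    by (rule geo_bound[OF delta lam _ rec]) (use K0 in simp)
  have B: "2 * K * lam ^ t * dlt / (lam - dlt) \<le> 2 * K * lam ^ t / (1 - dlt)"
  proof -
    have "dlt / (lam - dlt) \<le> 1 / (1 - dlt)" using delta lam by (simp add: frac_le)
    then have "2 * K * lam ^ t * (dlt / (lam - dlt)) \<le> 2 * K * lam ^ t * (1 / (1 - dlt))"
      using K0 lam by (intro mult_left_mono) auto
    then show ?thesis by simp
  qed
  have C: "2 * K \<le> 2 * K * lam ^ t / (1 - dlt)"
  proof -
    have "1 \<le> lam ^ t / (1 - dlt)" using lam delta
      by (simp add: le_divide_eq one_le_power) (smt (verit) one_le_power)
    then show ?thesis using mult_left_mono[of 1 "lam ^ t / (1 - dlt)" "2 * K"] K0 by simp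
  qed
  have "X t \<le> 2 * K * lam ^ t / (1 - dlt) + 2 * K * lam ^ t / (1 - dlt)"
    using A B C X0 by linarith
  then have h: "X t \<le> (2 * K * lam ^ t + 2 * K * lam ^ t) / (1 - dlt)"
    by (simp add: add_divide_distrib)
  have e: "2 * K * lam ^ t + 2 * K * lam ^ t = 4 * K * lam ^ t" by (simp add: algebra_simps)
  show ?thesis using h unfolding e .
qed


lemma f_single: "{z. (z,v) \<in> E} = {u} \<Longrightarrow> v \<noteq> S \<Longrightarrow> f (Suc t) v = fflow E (p t) (f t) u v"
  by (simp add: f_step)
lemma b_single: "{z. (u,z) \<in> E} = {v} \<Longrightarrow> u \<noteq> D \<Longrightarrow> b (Suc t) u = bflow E (p t) (b t) u v"
  by (simp add: b_step)

lemma inA: "0 < k \<Longrightarrow> k < m \<Longrightarrow> {z. (z, A k) \<in> E} = {node1 m (k - 1)}" by (simp add: in_A)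
lemma outA: "0 < k \<Longrightarrow> k < m \<Longrightarrow> {z. (A k, z) \<in> E} = {node1 m (Suc k)}" by (simp add: out_A)
lemma inB: "0 < k \<Longrightarrow> k < n \<Longrightarrow> {z. (z, B k) \<in> E} = {node2 n (k - 1)}" by (simp add: in_B)
lemma outB: "0 < k \<Longrightarrow> k < n \<Longrightarrow> {z. (B k, z) \<in> E} = {node2 n (Suc k)}" by (simp add: out_B)

lemma fwd1: "0 < k \<Longrightarrow> k < m \<Longrightarrow> f (\<tau> + k) (A k) = fflow E (p \<tau>) (f \<tau>) S (node1 m 1)"
proof (induction k)
  case 0
  then show ?case by simp
next
  case (Suc k)
  show ?case
  proof (cases "k = 0")
    case True
    have "f (Suc \<tau>) (A 1) = fflow E (p \<tau>) (f \<tau>) (node1 m 0) (A 1)"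
      by (rule f_single) (use inA[of 1] Suc True in auto)
    moreover have "node1 m 1 = A 1" using Suc True by (simp add: node1_def)
    ultimately show ?thesis using True by (simp add: node1_def)
  next
    case False
    have "f (Suc (\<tau> + k)) (A (Suc k)) = fflow E (p (\<tau> + k)) (f (\<tau> + k)) (node1 m k) (A (Suc k))"
      by (rule f_single) (use inA[of "Suc k"] Suc in auto)
    also have "node1 m k = A k" using False Suc by (simp add: node1_def)
    also have "fflow E (p (\<tau> + k)) (f (\<tau> + k)) (A k) (A (Suc k)) = f (\<tau> + k) (A k)"
    proof (rule fflow_single)
      show "{z. (A k, z) \<in> E} = {A (Suc k)}" using outA[of k] False Suc by (simp add: node1_def)
      show "p (\<tau> + k) (A k) (A (Suc k)) > 0"
        using ppos[OF edgeA_out[of k m n]] False Suc by (simp add: node1_def)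
    qed
    also have "\<dots> = fflow E (p \<tau>) (f \<tau>) S (node1 m 1)" using Suc False by simp
    finally show ?thesis by simp
  qed
qed

lemma fwd2: "0 < k \<Longrightarrow> k < n \<Longrightarrow> f (\<tau> + k) (B k) = fflow E (p \<tau>) (f \<tau>) S (node2 n 1)"
proof (induction k)
  case 0
  then show ?case by simp
next
  case (Suc k)
  show ?case
  proof (cases "k = 0")
    case True
    have "f (Suc \<tau>) (B 1) = fflow E (p \<tau>) (f \<tau>) (node2 n 0) (B 1)"
      by (rule f_single) (use inB[of 1] Suc True in auto)
    moreover have "node2 n 1 = B 1" using Suc True by (simp add: node2_def)
    ultimately show ?thesis using True by (simp add: node2_def)
  next
    case False
    have "f (Suc (\<tau> + k)) (B (Suc k)) = fflow E (p (\<tau> + k)) (f (\<tau> + k)) (node2 n k) (B (Suc k))"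
      by (rule f_single) (use inB[of "Suc k"] Suc in auto)
    also have "node2 n k = B k" using False Suc by (simp add: node2_def)
    also have "fflow E (p (\<tau> + k)) (f (\<tau> + k)) (B k) (B (Suc k)) = f (\<tau> + k) (B k)"
    proof (rule fflow_single)
      show "{z. (B k, z) \<in> E} = {B (Suc k)}" using outB[of k] False Suc by (simp add: node2_def)
      show "p (\<tau> + k) (B k) (B (Suc k)) > 0"
        using ppos[OF edgeB_out[of k n m]] False Suc by (simp add: node2_def)
    qed
    also have "\<dots> = fflow E (p \<tau>) (f \<tau>) S (node2 n 1)" using Suc False by simp
    finally show ?thesis by simp
  qed
qed


lemma bwd1: "0 < j \<Longrightarrow> j < m \<Longrightarrow> b (\<tau> + j) (A (m - j)) = bflow E (p \<tau>) (b \<tau>) (node1 m (m - 1)) D"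
proof (induction j)
  case 0
  then show ?case by simp
next
  case (Suc j)
  show ?case
  proof (cases "j = 0")
    case True
    have "b (Suc \<tau>) (A (m - 1)) = bflow E (p \<tau>) (b \<tau>) (A (m - 1)) (node1 m (Suc (m - 1)))"
      by (rule b_single) (use outA[of "m - 1"] Suc True in auto)
    moreover have mm: "Suc (m - 1) = m" "m - 1 \<noteq> m" "m - 1 \<noteq> 0" using Suc True by auto
    ultimately show ?thesis using True by (simp add: node1_def)
  next
    case False
    have "b (Suc (\<tau> + j)) (A (m - Suc j)) = bflow E (p (\<tau> + j)) (b (\<tau> + j)) (A (m - Suc j)) (node1 m (Suc (m - Suc j)))"
      by (rule b_single) (use outA[of "m - Suc j"] Suc in auto)
    also have "node1 m (Suc (m - Suc j)) = A (m - j)"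
    proof -
      have "Suc (m - Suc j) = m - j" "m - j \<noteq> m" "m - j \<noteq> 0" using False Suc(2,3) by arith+
      then show ?thesis by (simp add: node1_def)
    qed
    also have "bflow E (p (\<tau> + j)) (b (\<tau> + j)) (A (m - Suc j)) (A (m - j)) = b (\<tau> + j) (A (m - j))"
    proof (rule bflow_single)
      have "Suc (m - Suc j) = m - j" using Suc by simp
      then show "{z. (z, A (m - j)) \<in> E} = {A (m - Suc j)}" using inA[of "m - j"] False Suc
        by (simp add: node1_def)
      have "p (\<tau> + j) (A (m - Suc j)) (node1 m (Suc (m - Suc j))) > 0"
        using ppos[OF edgeA_out[of "m - Suc j" m n]] Suc by simp
      then show "p (\<tau> + j) (A (m - Suc j)) (A (m - j)) > 0"
        using \<open>Suc (m - Suc j) = m - j\<close> False Suc by (simp add: node1_def split: if_splits)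
    qed
    also have "\<dots> = bflow E (p \<tau>) (b \<tau>) (node1 m (m - 1)) D" using Suc False by simp
    finally show ?thesis by simp
  qed
qed

lemma bwd2: "0 < j \<Longrightarrow> j < n \<Longrightarrow> b (\<tau> + j) (B (n - j)) = bflow E (p \<tau>) (b \<tau>) (node2 n (n - 1)) D"
proof (induction j)
  case 0
  then show ?case by simp
next
  case (Suc j)
  show ?case
  proof (cases "j = 0")
    case True
    have "b (Suc \<tau>) (B (n - 1)) = bflow E (p \<tau>) (b \<tau>) (B (n - 1)) (node2 n (Suc (n - 1)))"
      by (rule b_single) (use outB[of "n - 1"] Suc True in auto)
    moreover have mm: "Suc (n - 1) = n" "n - 1 \<noteq> n" "n - 1 \<noteq> 0" using Suc True by auto
    ultimately show ?thesis using True by (simp add: node2_def)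
  next
    case False
    have "b (Suc (\<tau> + j)) (B (n - Suc j)) = bflow E (p (\<tau> + j)) (b (\<tau> + j)) (B (n - Suc j)) (node2 n (Suc (n - Suc j)))"
      by (rule b_single) (use outB[of "n - Suc j"] Suc in auto)
    also have "node2 n (Suc (n - Suc j)) = B (n - j)"
    proof -
      have "Suc (n - Suc j) = n - j" "n - j \<noteq> n" "n - j \<noteq> 0" using False Suc(2,3) by arith+
      then show ?thesis by (simp add: node2_def)
    qed
    also have "bflow E (p (\<tau> + j)) (b (\<tau> + j)) (B (n - Suc j)) (B (n - j)) = b (\<tau> + j) (B (n - j))"
    proof (rule bflow_single)
      have "Suc (n - Suc j) = n - j" using Suc by simp
      then show "{z. (z, B (n - j)) \<in> E} = {B (n - Suc j)}" using inB[of "n - j"] False Suc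
        by (simp add: node2_def)
      have "p (\<tau> + j) (B (n - Suc j)) (node2 n (Suc (n - Suc j))) > 0"
        using ppos[OF edgeB_out[of "n - Suc j" n m]] Suc by simp
      then show "p (\<tau> + j) (B (n - Suc j)) (B (n - j)) > 0"
        using \<open>Suc (n - Suc j) = n - j\<close> False Suc by (simp add: node2_def split: if_splits)
    qed
    also have "\<dots> = bflow E (p \<tau>) (b \<tau>) (node2 n (n - 1)) D" using Suc False by simp
    finally show ?thesis by simp
  qed
qed

lemma fD1: "m - 1 \<le> \<tau> \<Longrightarrow> fflow E (p \<tau>) (f \<tau>) (node1 m (m - 1)) D
   = fflow E (p (\<tau> - (m - 1))) (f (\<tau> - (m - 1))) S (node1 m 1)"
proof (cases "m = 1")
  case True
  then show ?thesis by (simp add: node1_def)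
next
  case False
  assume tm: "m - 1 \<le> \<tau>"
  have m1: "1 < m" using False mn by simp
  have "fflow E (p \<tau>) (f \<tau>) (A (m - 1)) D = f \<tau> (A (m - 1))"
  proof (rule fflow_single)
    show "{z. (A (m - 1), z) \<in> E} = {D}" using outA[of "m - 1"] m1 by (simp add: node1_def)
    have "m - 1 \<noteq> m" "m - 1 \<noteq> 0" using m1 by auto
    then show "p \<tau> (A (m - 1)) D > 0" using ppos[OF eD1] by (simp add: node1_def)
  qed
  also have "\<dots> = f ((\<tau> - (m - 1)) + (m - 1)) (A (m - 1))" using tm by simp
  also have "\<dots> = fflow E (p (\<tau> - (m - 1))) (f (\<tau> - (m - 1))) S (node1 m 1)"
    by (rule fwd1) (use m1 in auto)
  moreover have "m - 1 \<noteq> m" "m - 1 \<noteq> 0" "1 \<noteq> m" using m1 by auto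
  ultimately show ?thesis by (simp add: node1_def)
qed

lemma fD2: "n - 1 \<le> \<tau> \<Longrightarrow> fflow E (p \<tau>) (f \<tau>) (node2 n (n - 1)) D
   = fflow E (p (\<tau> - (n - 1))) (f (\<tau> - (n - 1))) S (node2 n 1)"
proof -
  assume tm: "n - 1 \<le> \<tau>"
  have m1: "1 < n" using n2 by simp
  have "fflow E (p \<tau>) (f \<tau>) (B (n - 1)) D = f \<tau> (B (n - 1))"
  proof (rule fflow_single)
    show "{z. (B (n - 1), z) \<in> E} = {D}" using outB[of "n - 1"] m1 by (simp add: node2_def)
    have "n - 1 \<noteq> n" "n - 1 \<noteq> 0" using m1 by auto
    then show "p \<tau> (B (n - 1)) D > 0" using ppos[OF eD2] by (simp add: node2_def)
  qed
  also have "\<dots> = f ((\<tau> - (n - 1)) + (n - 1)) (B (n - 1))" using tm by simp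
  also have "\<dots> = fflow E (p (\<tau> - (n - 1))) (f (\<tau> - (n - 1))) S (node2 n 1)"
    by (rule fwd2) (use m1 in auto)
  moreover have "n - 1 \<noteq> n" "n - 1 \<noteq> 0" "1 \<noteq> n" using m1 by auto
  ultimately show ?thesis by (simp add: node2_def)
qed

lemma bS1: "m - 1 \<le> \<tau> \<Longrightarrow> bflow E (p \<tau>) (b \<tau>) S (node1 m 1)
   = bflow E (p (\<tau> - (m - 1))) (b (\<tau> - (m - 1))) (node1 m (m - 1)) D"
proof (cases "m = 1")
  case True
  then show ?thesis by (simp add: node1_def)
next
  case False
  assume tm: "m - 1 \<le> \<tau>"
  have m1: "1 < m" using False mn by simp
  have "bflow E (p \<tau>) (b \<tau>) S (A 1) = b \<tau> (A 1)"
  proof (rule bflow_single)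
    show "{z. (z, A 1) \<in> E} = {S}" using inA[of 1] m1 by (simp add: node1_def)
    show "p \<tau> S (A 1) > 0" using ppos[OF eS1] m1 by (simp add: node1_def)
  qed
  also have "\<dots> = b ((\<tau> - (m - 1)) + (m - 1)) (A (m - (m - 1)))" using tm m1 by simp
  also have "\<dots> = bflow E (p (\<tau> - (m - 1))) (b (\<tau> - (m - 1))) (node1 m (m - 1)) D"
    by (rule bwd1) (use m1 in auto)
  moreover have "m - 1 \<noteq> m" "m - 1 \<noteq> 0" "1 \<noteq> m" using m1 by auto
  ultimately show ?thesis by (simp add: node1_def)
qed

lemma bS2: "n - 1 \<le> \<tau> \<Longrightarrow> bflow E (p \<tau>) (b \<tau>) S (node2 n 1)
   = bflow E (p (\<tau> - (n - 1))) (b (\<tau> - (n - 1))) (node2 n (n - 1)) D"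
proof -
  assume tm: "n - 1 \<le> \<tau>"
  have m1: "1 < n" using n2 by simp
  have "bflow E (p \<tau>) (b \<tau>) S (B 1) = b \<tau> (B 1)"
  proof (rule bflow_single)
    show "{z. (z, B 1) \<in> E} = {S}" using inB[of 1] m1 by (simp add: node2_def)
    show "p \<tau> S (B 1) > 0" using ppos[OF eS2] m1 by (simp add: node2_def)
  qed
  also have "\<dots> = b ((\<tau> - (n - 1)) + (n - 1)) (B (n - (n - 1)))" using tm m1 by simp
  also have "\<dots> = bflow E (p (\<tau> - (n - 1))) (b (\<tau> - (n - 1))) (node2 n (n - 1)) D"
    by (rule bwd2) (use m1 in auto)
  moreover have "n - 1 \<noteq> n" "n - 1 \<noteq> 0" "1 \<noteq> n" using m1 by auto
  ultimately show ?thesis by (simp add: node2_def)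
qed


abbreviation "cc \<equiv> min (f 0 S) (b 0 D) * (1 - dlt) * (lam - 1) / (6 * (f 0 S + b 0 D) * lam ^ m)"

lemma cc_nonneg: "cc \<ge> 0" using fs0 bd0 delta lam by simp

lemma ratio_le: "x > 0 \<Longrightarrow> R \<le> y / x \<Longrightarrow> R * x \<le> y" for x y R :: real
  by (simp add: pos_le_divide_eq)

lemma rs_step:
  assumes tau: "n - 1 \<le> \<tau>"
    and PSb: "p \<tau> S (node1 m 1) + p \<tau> S (node2 n 1) \<le> 4 * K * lam ^ \<tau> / (1 - dlt)"
    and R: "R \<ge> 0"
    and h1: "r_s m n p \<tau> \<ge> R"
    and h2: "r_d m n p (\<tau> - (m - 1)) \<ge> R"
    and h3: "r_d m n p (\<tau> - (n - 1)) \<ge> R"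
  shows "r_s m n p (Suc \<tau>) \<ge> (1 + cc) * R"
proof -
  define s1 where "s1 = node1 m 1"
  define s2 where "s2 = node2 n 1"
  define d1 where "d1 = node1 m (m - 1)"
  define d2 where "d2 = node2 n (n - 1)"
  define \<sigma>1 where "\<sigma>1 = \<tau> - (m - 1)"
  define \<sigma>2 where "\<sigma>2 = \<tau> - (n - 1)"
  define p1 where "p1 = p \<tau> S s1"
  define p2 where "p2 = p \<tau> S s2"
  define u1 where "u1 = p \<sigma>1 d1 D"
  define u2 where "u2 = p \<sigma>1 d2 D"
  define w1 where "w1 = p \<sigma>2 d1 D"
  define w2 where "w2 = p \<sigma>2 d2 D"
  define F where "F = f \<tau> S"
  define b1 where "b1 = b \<sigma>1 D"
  define b2 where "b2 = b \<sigma>2 D"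
  have tm: "m - 1 \<le> \<tau>" using tau mn by simp
  have pp: "p1 > 0" "p2 > 0" unfolding p1_def p2_def s1_def s2_def using ppos[OF eS1] ppos[OF eS2] by auto
  have uu: "u1 > 0" "u2 > 0" "w1 > 0" "w2 > 0"
    unfolding u1_def u2_def w1_def w2_def d1_def d2_def using ppos[OF eD1] ppos[OF eD2] by auto
  have oS: "{z. (S, z) \<in> E} = {s1, s2}" unfolding s1_def s2_def using out_S mn by simp
  have iD: "{z. (z, D) \<in> E} = {d1, d2}" unfolding d1_def d2_def using in_D mn by simp
  have sne: "s1 \<noteq> s2" unfolding s1_def s2_def by (rule s12)
  have dne: "d1 \<noteq> d2" unfolding d1_def d2_def by (rule d12)
  have num: "p (Suc \<tau>) S s1 = dlt * (p1 + F * p1 / (p1 + p2) + b1 * u1 / (u1 + u2))"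
  proof -
    have "fflow E (p \<tau>) (f \<tau>) S s1 = F * p1 / (p1 + p2)"
      using fflow_two[OF oS sne] unfolding F_def p1_def p2_def by blast
    moreover have "bflow E (p \<tau>) (b \<tau>) S s1 = b1 * u1 / (u1 + u2)"
      using bS1[OF tm] bflow_two[OF iD dne] unfolding b1_def u1_def u2_def \<sigma>1_def s1_def d1_def
      by simp
    ultimately show ?thesis using p_step[OF eS1, of \<tau>] unfolding p1_def s1_def by simp
  qed
  have den: "p (Suc \<tau>) S s2 = dlt * (p2 + F * p2 / (p1 + p2) + b2 * w2 / (w1 + w2))"
  proof -
    have "fflow E (p \<tau>) (f \<tau>) S s2 = F * p2 / (p1 + p2)"
      using fflow_two[OF oS sne] unfolding F_def p1_def p2_def by blast
    moreover have "bflow E (p \<tau>) (b \<tau>) S s2 = b2 * w2 / (w1 + w2)"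
      using bS2[OF tau] bflow_two[OF iD dne] unfolding b2_def w1_def w2_def \<sigma>2_def s2_def d2_def
      by simp
    ultimately show ?thesis using p_step[OF eS2, of \<tau>] unfolding p2_def s2_def by simp
  qed
  have r1: "R * p2 \<le> p1" using ratio_le[OF pp(2)] h1 unfolding r_s_def p1_def p2_def s1_def s2_def by simp
  have r2: "R * u2 \<le> u1" using ratio_le[OF uu(2)] h2 unfolding r_d_def u1_def u2_def d1_def d2_def \<sigma>1_def by simp
  have r3: "R * w2 \<le> w1" using ratio_le[OF uu(4)] h3 unfolding r_d_def w1_def w2_def d1_def d2_def \<sigma>2_def by simp
  have F0: "F \<ge> 0" unfolding F_def by (rule fnn)
  have b20: "b2 \<ge> 0" unfolding b2_def by (rule bnn)
  have gain: "cc * (p1 + p2 + F + b2) \<le> b1 - b2"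
  proof -
    have P: "p1 + p2 \<le> 4 * (b 0 D + f 0 S) * lam ^ \<tau> / (1 - dlt)"
      using PSb unfolding p1_def p2_def s1_def s2_def by (simp add: add.commute)
    have "min (b 0 D) (f 0 S) * (1 - dlt) * (lam - 1) / (6 * (b 0 D + f 0 S) * lam ^ m)
           * (p1 + p2 + lam ^ \<tau> * f 0 S + lam ^ (\<tau> - (n - 1)) * b 0 D)
         \<le> lam ^ (\<tau> - (m - 1)) * b 0 D - lam ^ (\<tau> - (n - 1)) * b 0 D"
      by (rule gain_arith[OF lam delta bd0 fs0 mn tau P])
    then show ?thesis unfolding F_def b1_def b2_def \<sigma>1_def \<sigma>2_def fS[of \<tau>] bD[of "\<tau> - (m - 1)"] bD[of "\<tau> - (n - 1)"]
      by (simp add: min.commute add.commute add.assoc)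
  qed
  have main: "(1 + cc) * R * (p2 + F * p2 / (p1 + p2) + b2 * w2 / (w1 + w2))
         \<le> p1 + F * p1 / (p1 + p2) + b1 * u1 / (u1 + u2)"
    by (rule step_ineq[OF R cc_nonneg pp uu F0 b20 r1 r2 r3 gain])
  have dpos: "p2 + F * p2 / (p1 + p2) + b2 * w2 / (w1 + w2) > 0"
    using pp uu F0 b20 by (simp add: add_pos_nonneg)
  have "r_s m n p (Suc \<tau>) = (p1 + F * p1 / (p1 + p2) + b1 * u1 / (u1 + u2))
        / (p2 + F * p2 / (p1 + p2) + b2 * w2 / (w1 + w2))"
    unfolding r_s_def s1_def[symmetric] s2_def[symmetric] num den using delta by simp
  then show ?thesis using main dpos by (simp add: pos_le_divide_eq)
qed


lemma rd_step:
  assumes tau: "n - 1 \<le> \<tau>"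
    and PDb: "p \<tau> (node1 m (m - 1)) D + p \<tau> (node2 n (n - 1)) D \<le> 4 * K * lam ^ \<tau> / (1 - dlt)"
    and R: "R \<ge> 0"
    and h1: "r_d m n p \<tau> \<ge> R"
    and h2: "r_s m n p (\<tau> - (m - 1)) \<ge> R"
    and h3: "r_s m n p (\<tau> - (n - 1)) \<ge> R"
  shows "r_d m n p (Suc \<tau>) \<ge> (1 + cc) * R"
proof -
  define s1 where "s1 = node1 m 1"
  define s2 where "s2 = node2 n 1"
  define d1 where "d1 = node1 m (m - 1)"
  define d2 where "d2 = node2 n (n - 1)"
  define \<sigma>1 where "\<sigma>1 = \<tau> - (m - 1)"
  define \<sigma>2 where "\<sigma>2 = \<tau> - (n - 1)"
  define p1 where "p1 = p \<tau> d1 D"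
  define p2 where "p2 = p \<tau> d2 D"
  define u1 where "u1 = p \<sigma>1 S s1"
  define u2 where "u2 = p \<sigma>1 S s2"
  define w1 where "w1 = p \<sigma>2 S s1"
  define w2 where "w2 = p \<sigma>2 S s2"
  define F where "F = b \<tau> D"
  define b1 where "b1 = f \<sigma>1 S"
  define b2 where "b2 = f \<sigma>2 S"
  have tm: "m - 1 \<le> \<tau>" using tau mn by simp
  have pp: "p1 > 0" "p2 > 0" unfolding p1_def p2_def d1_def d2_def using ppos[OF eD1] ppos[OF eD2] by auto
  have uu: "u1 > 0" "u2 > 0" "w1 > 0" "w2 > 0"
    unfolding u1_def u2_def w1_def w2_def s1_def s2_def using ppos[OF eS1] ppos[OF eS2] by auto
  have oS: "{z. (S, z) \<in> E} = {s1, s2}" unfolding s1_def s2_def using out_S mn by simp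
  have iD: "{z. (z, D) \<in> E} = {d1, d2}" unfolding d1_def d2_def using in_D mn by simp
  have sne: "s1 \<noteq> s2" unfolding s1_def s2_def by (rule s12)
  have dne: "d1 \<noteq> d2" unfolding d1_def d2_def by (rule d12)
  have num: "p (Suc \<tau>) d1 D = dlt * (p1 + F * p1 / (p1 + p2) + b1 * u1 / (u1 + u2))"
  proof -
    have "bflow E (p \<tau>) (b \<tau>) d1 D = F * p1 / (p1 + p2)"
      using bflow_two[OF iD dne] unfolding F_def p1_def p2_def by blast
    moreover have "fflow E (p \<tau>) (f \<tau>) d1 D = b1 * u1 / (u1 + u2)"
      using fD1[OF tm] fflow_two[OF oS sne] unfolding b1_def u1_def u2_def \<sigma>1_def s1_def d1_def
      by simp
    ultimately show ?thesis using p_step[OF eD1, of \<tau>] unfolding p1_def d1_def by (simp add: algebra_simps)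
  qed
  have den: "p (Suc \<tau>) d2 D = dlt * (p2 + F * p2 / (p1 + p2) + b2 * w2 / (w1 + w2))"
  proof -
    have "bflow E (p \<tau>) (b \<tau>) d2 D = F * p2 / (p1 + p2)"
      using bflow_two[OF iD dne] unfolding F_def p1_def p2_def by blast
    moreover have "fflow E (p \<tau>) (f \<tau>) d2 D = b2 * w2 / (w1 + w2)"
      using fD2[OF tau] fflow_two[OF oS sne] unfolding b2_def w1_def w2_def \<sigma>2_def s2_def d2_def
      by simp
    ultimately show ?thesis using p_step[OF eD2, of \<tau>] unfolding p2_def d2_def by (simp add: algebra_simps)
  qed
  have r1: "R * p2 \<le> p1" using ratio_le[OF pp(2)] h1 unfolding r_d_def p1_def p2_def d1_def d2_def by simp
  have r2: "R * u2 \<le> u1" using ratio_le[OF uu(2)] h2 unfolding r_s_def u1_def u2_def s1_def s2_def \<sigma>1_def by simp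
  have r3: "R * w2 \<le> w1" using ratio_le[OF uu(4)] h3 unfolding r_s_def w1_def w2_def s1_def s2_def \<sigma>2_def by simp
  have F0: "F \<ge> 0" unfolding F_def by (rule bnn)
  have b20: "b2 \<ge> 0" unfolding b2_def by (rule fnn)
  have gain: "cc * (p1 + p2 + F + b2) \<le> b1 - b2"
  proof -
    have P: "p1 + p2 \<le> 4 * (f 0 S + b 0 D) * lam ^ \<tau> / (1 - dlt)"
      using PDb unfolding p1_def p2_def d1_def d2_def by simp
    have "min (f 0 S) (b 0 D) * (1 - dlt) * (lam - 1) / (6 * (f 0 S + b 0 D) * lam ^ m)
           * (p1 + p2 + lam ^ \<tau> * b 0 D + lam ^ (\<tau> - (n - 1)) * f 0 S)
         \<le> lam ^ (\<tau> - (m - 1)) * f 0 S - lam ^ (\<tau> - (n - 1)) * f 0 S"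
      by (rule gain_arith[OF lam delta fs0 bd0 mn tau P])
    then show ?thesis unfolding F_def b1_def b2_def \<sigma>1_def \<sigma>2_def bD[of \<tau>] fS[of "\<tau> - (m - 1)"] fS[of "\<tau> - (n - 1)"]
      by (simp add: add.assoc)
  qed
  have main: "(1 + cc) * R * (p2 + F * p2 / (p1 + p2) + b2 * w2 / (w1 + w2))
         \<le> p1 + F * p1 / (p1 + p2) + b1 * u1 / (u1 + u2)"
    by (rule step_ineq[OF R cc_nonneg pp uu F0 b20 r1 r2 r3 gain])
  have dpos: "p2 + F * p2 / (p1 + p2) + b2 * w2 / (w1 + w2) > 0"
    using pp uu F0 b20 by (simp add: add_pos_nonneg)
  have "r_d m n p (Suc \<tau>) = (p1 + F * p1 / (p1 + p2) + b1 * u1 / (u1 + u2))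
        / (p2 + F * p2 / (p1 + p2) + b2 * w2 / (w1 + w2))"
    unfolding r_d_def d1_def[symmetric] d2_def[symmetric] num den using delta by simp
  then show ?thesis using main dpos by (simp add: pos_le_divide_eq)
qed


lemma T1bound:
  assumes "ln (p 0 u v / K) / ln (1 / dlt) \<le> real \<tau>" "(u, v) \<in> E"
  shows "dlt ^ \<tau> * p 0 u v \<le> K"
proof -
  have K0: "K > 0" using fs0 bd0 by simp
  have p0p: "p 0 u v > 0" using ppos[OF assms(2)] by simp
  have l0: "ln (1 / dlt) > 0" using delta by simp
  have "ln (p 0 u v / K) \<le> real \<tau> * ln (1 / dlt)"
    using assms(1) l0 by (simp add: divide_le_eq)
  also have "\<dots> = ln ((1 / dlt) ^ \<tau>)" using delta by (simp add: ln_realpow)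
  finally have "p 0 u v / K \<le> (1 / dlt) ^ \<tau>"
    using p0p K0 delta by (subst (asm) ln_le_cancel_iff) auto
  then have "p 0 u v / K \<le> 1 / dlt ^ \<tau>" by (simp add: power_one_over)
  then have "p 0 u v * dlt ^ \<tau> \<le> K" using K0 delta by (simp add: field_simps)
  then show ?thesis by (simp add: mult.commute)
qed

lemma PS_final:
  assumes "\<forall>(u, v) \<in> E. dlt ^ \<tau> * p 0 u v \<le> K"
  shows "p \<tau> S (node1 m 1) + p \<tau> S (node2 n 1) \<le> 4 * K * lam ^ \<tau> / (1 - dlt)"
proof (rule P_final[where X = "\<lambda>t. p t S (node1 m 1) + p t S (node2 n 1)"])
  show "\<And>t. p (Suc t) S (node1 m 1) + p (Suc t) S (node2 n 1)
    \<le> dlt * (p t S (node1 m 1) + p t S (node2 n 1) + 2 * K * lam ^ t)" by (rule PS_rec)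
  have "dlt ^ \<tau> * p 0 S (node1 m 1) \<le> K" "dlt ^ \<tau> * p 0 S (node2 n 1) \<le> K"
    using assms eS1 eS2 by auto
  then show "dlt ^ \<tau> * (p 0 S (node1 m 1) + p 0 S (node2 n 1)) \<le> 2 * K"
    by (simp add: distrib_left)
qed

lemma PD_final:
  assumes "\<forall>(u, v) \<in> E. dlt ^ \<tau> * p 0 u v \<le> K"
  shows "p \<tau> (node1 m (m - 1)) D + p \<tau> (node2 n (n - 1)) D \<le> 4 * K * lam ^ \<tau> / (1 - dlt)"
proof (rule P_final[where X = "\<lambda>t. p t (node1 m (m - 1)) D + p t (node2 n (n - 1)) D"])
  show "\<And>t. p (Suc t) (node1 m (m - 1)) D + p (Suc t) (node2 n (n - 1)) D
    \<le> dlt * (p t (node1 m (m - 1)) D + p t (node2 n (n - 1)) D + 2 * K * lam ^ t)" by (rule PD_rec)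
  have "dlt ^ \<tau> * p 0 (node1 m (m - 1)) D \<le> K" "dlt ^ \<tau> * p 0 (node2 n (n - 1)) D \<le> K"
    using assms eD1 eD2 by auto
  then show "dlt ^ \<tau> * (p 0 (node1 m (m - 1)) D + p 0 (node2 n (n - 1)) D) \<le> 2 * K"
    by (simp add: distrib_left)
qed

lemma rs_pos: "r_s m n p \<tau> > 0"
  unfolding r_s_def using ppos[OF eS1] ppos[OF eS2] by simp
lemma rd_pos: "r_d m n p \<tau> > 0"
  unfolding r_d_def using ppos[OF eD1] ppos[OF eD2] by simp


lemma main:
  assumes tbig: "real t \<ge> real (max m n) +
        max 0 (Max ((\<lambda>(u, v). ln (p 0 u v / (f 0 S + b 0 D)) / ln (1 / dlt)) ` E))"
  shows "r_min m n p (t + max m n) \<ge> (1 + cc) * r_min m n p t"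
proof -
  define M where "M = Max ((\<lambda>(u, v). ln (p 0 u v / (f 0 S + b 0 D)) / ln (1 / dlt)) ` E)"
  have Ln: "max m n = n" using mn by simp
  have tn: "n \<le> t" using tbig unfolding Ln by linarith
  have T: "\<forall>(u, v) \<in> E. dlt ^ \<tau> * p 0 u v \<le> K" if "t \<le> \<tau>" for \<tau>
  proof (intro ballI, clarify)
    fix u v assume e: "(u, v) \<in> E"
    have "ln (p 0 u v / K) / ln (1 / dlt) \<le> M"
      unfolding M_def by (rule Max_ge) (use finite_edges e in auto)
    also have "M \<le> real \<tau>" using tbig that unfolding M_def[symmetric] by linarith
    finally show "dlt ^ \<tau> * p 0 u v \<le> K" by (rule T1bound[OF _ e])
  qed
  define R where "R = r_min m n p t"
  define Wt where "Wt = (\<lambda>i. r_s m n p (t - i)) ` {..<n} \<union> (\<lambda>i. r_d m n p (t - i)) ` {..<n}"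
  have Rdef: "R = Min Wt" unfolding R_def r_min_def Wt_def Ln ..
  have Wfin: "finite Wt" "Wt \<noteq> {}" unfolding Wt_def using n2 by (auto simp: lessThan_empty_iff)
  have win: "R \<le> r_s m n p (t - i) \<and> R \<le> r_d m n p (t - i)" if "i < n" for i
    unfolding Rdef using Wfin that by (auto intro!: Min_le simp: Wt_def)
  have R0: "R \<ge> 0" unfolding Rdef using Wfin
    by (auto simp: Min_ge_iff Wt_def intro: less_imp_le rs_pos rd_pos)
  have c0: "R \<le> (1 + cc) * R"
  proof -
    have "0 \<le> cc * R" using mult_nonneg_nonneg[OF cc_nonneg R0] .
    then have "R \<le> R + cc * R" by linarith
    also have "R + cc * R = (1 + cc) * R" by (simp only: distrib_right mult_1)
    finally show ?thesis .
  qed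
  have claim: "\<forall>j. j < n \<longrightarrow> (1 + cc) * R \<le> r_s m n p (t + j + 1) \<and> (1 + cc) * R \<le> r_d m n p (t + j + 1)"
  proof (rule allI, induct_tac j rule: nat_less_induct)
    fix j assume IH: "\<forall>j'<j. j' < n \<longrightarrow> (1 + cc) * R \<le> r_s m n p (t + j' + 1) \<and> (1 + cc) * R \<le> r_d m n p (t + j' + 1)"
    show "j < n \<longrightarrow> (1 + cc) * R \<le> r_s m n p (t + j + 1) \<and> (1 + cc) * R \<le> r_d m n p (t + j + 1)"
    proof
      assume jn: "j < n"
      define \<tau> where "\<tau> = t + j"
      have G: "R \<le> r_s m n p \<sigma> \<and> R \<le> r_d m n p \<sigma>" if "t < \<sigma> + n" "\<sigma> \<le> \<tau>" for \<sigma>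
      proof (cases "\<sigma> \<le> t")
        case True
        have "t - (t - \<sigma>) = \<sigma>" using True by simp
        then show ?thesis using win[of "t - \<sigma>"] that True by simp
      next
        case False
        define j' where "j' = \<sigma> - t - 1"
        have "\<sigma> = t + j' + 1" "j' < j" "j' < n" using False that jn unfolding j'_def \<tau>_def by auto
        then show ?thesis using IH c0 by fastforce
      qed
      have tau: "n - 1 \<le> \<tau>" using tn unfolding \<tau>_def by simp
      have Tt: "\<forall>(u, v) \<in> E. dlt ^ \<tau> * p 0 u v \<le> K" using T[of \<tau>] unfolding \<tau>_def by simp
      have g1: "R \<le> r_s m n p \<tau> \<and> R \<le> r_d m n p \<tau>" by (rule G) (use tn n2 \<tau>_def in auto)
      have g2: "R \<le> r_s m n p (\<tau> - (m - 1)) \<and> R \<le> r_d m n p (\<tau> - (m - 1))"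
        by (rule G) (use tn mn \<tau>_def in auto)
      have g3: "R \<le> r_s m n p (\<tau> - (n - 1)) \<and> R \<le> r_d m n p (\<tau> - (n - 1))"
        by (rule G) (use tn mn \<tau>_def in auto)
      have "(1 + cc) * R \<le> r_s m n p (Suc \<tau>)"
        by (rule rs_step[OF tau PS_final[OF Tt] R0]) (use g1 g2 g3 in auto)
      moreover have "(1 + cc) * R \<le> r_d m n p (Suc \<tau>)"
        by (rule rd_step[OF tau PD_final[OF Tt] R0]) (use g1 g2 g3 in auto)
      ultimately show "(1 + cc) * R \<le> r_s m n p (t + j + 1) \<and> (1 + cc) * R \<le> r_d m n p (t + j + 1)"
        unfolding \<tau>_def by simp
    qed
  qed
  define Wn where "Wn = (\<lambda>i. r_s m n p (t + n - i)) ` {..<n} \<union> (\<lambda>i. r_d m n p (t + n - i)) ` {..<n}"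
  have Wnfin: "finite Wn" "Wn \<noteq> {}" unfolding Wn_def using n2 by (auto simp: lessThan_empty_iff)
  have "(1 + cc) * R \<le> Min Wn"
  proof (subst Min_ge_iff[OF Wnfin], intro ballI)
    fix x assume "x \<in> Wn"
    then obtain i where i: "i < n" "x = r_s m n p (t + n - i) \<or> x = r_d m n p (t + n - i)"
      unfolding Wn_def by auto
    have "t + n - i = t + (n - 1 - i) + 1" using i by simp
    then show "(1 + cc) * R \<le> x" using claim[rule_format, of "n - 1 - i"] i by auto
  qed
  moreover have "r_min m n p (t + max m n) = Min Wn" unfolding r_min_def Wn_def Ln ..
  ultimately show ?thesis unfolding R_def by simp
qed

end

theorem mainTheorem14:
  fixes m n :: nat and dlt lam :: real and l :: "vtx \<Rightarrow> real"
    and p :: "nat \<Rightarrow> vtx \<Rightarrow> vtx \<Rightarrow> real" and f b :: "nat \<Rightarrow> vtx \<Rightarrow> real" and t :: nat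
  assumes dyn: "dynamics (edges m n) S D dlt l p f b"
    and delta: "0 < dlt" "dlt < 1"
    and leak: "\<forall>v. l v = 0"
    and mn: "1 \<le> m" "m < n"
    and p0: "\<forall>(u, v) \<in> edges m n. p 0 u v > 0"
    and lam: "lam > 1"
    and fs: "\<forall>t. f t S = lam ^ t * f 0 S"
    and bd: "\<forall>t. b t D = lam ^ t * b 0 D"
    and fs0: "f 0 S > 0" and bd0: "b 0 D > 0"
    and nonneg: "\<forall>v. f 0 v \<ge> 0 \<and> b 0 v \<ge> 0"
    and init: "\<forall>v. v \<noteq> S \<and> v \<noteq> D \<longrightarrow> f 0 v \<le> f 0 S \<and> b 0 v \<le> b 0 D"
    and tbig: "real t \<ge> real (max m n) +
        max 0 (Max ((\<lambda>(u, v). ln (p 0 u v / (f 0 S + b 0 D)) / ln (1 / dlt)) ` edges m n))"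
  shows "r_min m n p (t + max m n) \<ge>
    (1 + min (f 0 S) (b 0 D) * (1 - dlt) * (lam - 1) / (6 * (f 0 S + b 0 D) * lam ^ m))
      * r_min m n p t"
proof -
  interpret sys m n dlt lam l p f b
    by (rule sys.intro[OF dyn delta leak mn p0 lam fs bd fs0 bd0 nonneg init])
  show ?thesis using main[OF tbig] by simp
qed

end
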